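(* Let $d\ge2$ and $\mu>2(d+1)\log d$. Then there exists $\epsilon>0$ such that \[ \operatorname{Poi}(\lambda+\epsilon)\preceq\mathcal{A}\operatorname{Poi}(\lambda)\quad\text{for all }\lambda\ge0. \]
   Context: The operator $\mathcal{A}$ (depending on $d$ and $\mu$): for a probability measure $\pi$ on $\{0,1,2,\dots\}\cup\{\infty\}$, consider a star graph with central vertex $\varnothing'$ and $d+1$ leaves $\varnothing,v_1,\dots,v_d$. Let $X\sim\operatorname{Poi}(\mu)$ and $X_1,\dots,X_d\sim\pi$, all independent; place $X$ particles at $\varnothing'$ and $X_i$ at $v_i$. The particles at $\varnothing'$ and $v_1$ are first-wave particles, active initially. Each particle at $\varnothing'$ moves to a uniformly random leaf among $\varnothing,v_1,\dots,v_d$ and halts; each particle at $v_1$ moves to $\varnothing'$ and then to a uniformly random leaf among $\varnothing,v_2,\dots,v_d$ and halts. For $2\le i\le d$, if some first-wave particle ends at $v_i$, the $X_i$ particles at $v_i$ (second-wave) are activated: each moves to $\varnothing'$ and then to a uniformly random leaf other than $v_i$, and halts; second-wave particles activate nothing. All choices are independent. $\mathcal{A}\pi$ is the law of the number of particles ending at $\varnothing$. $\operatorname{Poi}(0)$ is the point mass at $0$; $\log$ is the natural logarithm. Stochastic dominance: $\pi_1\preceq\pi_2$ means $\pi_1([x,\infty])\le\pi_2([x,\infty])$ for all $x$. *)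

theory Defs
  imports "HOL-Probability.Probability" "HOL-Library.Extended_Nat"
begin

text \<open>Poisson law on the naturals; Poi(0) is the point mass at 0
  (the library's poisson_pmf requires a positive rate).\<close>
definition Poi :: "real \<Rightarrow> nat pmf" where
  "Poi r = (if r > 0 then poisson_pmf r else return_pmf 0)"

definition PoiE :: "real \<Rightarrow> enat pmf" where
  "PoiE r = map_pmf enat (Poi r)"

primrec seq_pmf :: "'a pmf list \<Rightarrow> 'a list pmf" where
  "seq_pmf [] = return_pmf []"
| "seq_pmf (p # ps) = bind_pmf p (\<lambda>x. map_pmf (Cons x) (seq_pmf ps))"

definition iid_list :: "nat \<Rightarrow> 'a pmf \<Rightarrow> 'a list pmf" where
  "iid_list n p = seq_pmf (replicate n p)"

text \<open>Leaves are encoded as naturals: 0 is the leaf \<emptyset>, i \<in> {1..d} is v_i.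
  Xs is the list [X_1,...,X_d]; Xs ! (i-1) = X_i.  Infinite particle counts: a site with infinitely many
  particles that gets activated sends, almost surely, infinitely many particles
  to \<emptyset> (and, for v_1, to every v_i); this almost-sure outcome is used.\<close>
definition opA :: "nat \<Rightarrow> real \<Rightarrow> enat pmf \<Rightarrow> enat pmf" where
  "opA d \<mu> \<pi> =
    bind_pmf (Poi \<mu>) (\<lambda>X.
    bind_pmf (iid_list d \<pi>) (\<lambda>Xs.
      if Xs ! 0 = \<infinity> then return_pmf \<infinity> else
      bind_pmf (iid_list X (pmf_of_set {0..d})) (\<lambda>W0.
      bind_pmf (iid_list (the_enat (Xs ! 0)) (pmf_of_set ({0..d} - {1}))) (\<lambda>W1.
        let act = (\<lambda>i. i \<in> set W0 \<or> i \<in> set W1) in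
        if (\<exists>i\<in>{2..d}. act i \<and> Xs ! (i - 1) = \<infinity>) then return_pmf \<infinity> else
        bind_pmf (seq_pmf (map (\<lambda>i. if act i
                   then iid_list (the_enat (Xs ! (i - 1))) (pmf_of_set ({0..d} - {i}))
                   else return_pmf []) [2..<d+1])) (\<lambda>Ws.
        return_pmf (enat (length (filter (\<lambda>j. j = 0) (W0 @ W1 @ concat Ws)))))))))"

definition stoch_le :: "enat pmf \<Rightarrow> enat pmf \<Rightarrow> bool" where
  "stoch_le p q \<longleftrightarrow> (\<forall>x. measure_pmf.prob p {y. x \<le> y} \<le> measure_pmf.prob q {y. x \<le> y})"

end

theory Submission
  imports Defs "HOL-Combinatorics.Multiset_Permutations"
begin

lemma prob_bind_pmf:
  "measure_pmf.prob (bind_pmf M N) X = (\<integral>x. measure_pmf.prob (N x) X \<partial>M)"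
proof -
  have "emeasure (measure_pmf (bind_pmf M N)) X = (\<integral>\<^sup>+x. ennreal (measure_pmf.prob (N x) X) \<partial>M)"
    unfolding emeasure_bind_pmf by (simp add: measure_pmf.emeasure_eq_measure)
  also have "\<dots> = ennreal (\<integral>x. measure_pmf.prob (N x) X \<partial>M)"
    by (intro nn_integral_eq_integral measure_pmf.integrable_const_bound[where B=1]) auto
  finally show ?thesis
    by (simp add: measure_pmf.emeasure_eq_measure)
qed

lemma pmf_Poi: "r \<ge> 0 \<Longrightarrow> pmf (Poi r) k = r ^ k / fact k * exp (- r)"
  by (cases "r = 0") (auto simp: Poi_def indicator_def)

definition conv :: "nat pmf \<Rightarrow> nat pmf \<Rightarrow> nat pmf" where
  "conv p q = bind_pmf p (\<lambda>x. map_pmf ((+) x) q)"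

lemma pmf_map_add: "pmf (map_pmf ((+) (x::nat)) q) n = (if x \<le> n then pmf q (n - x) else 0)"
proof -
  have "((+) x) -` {n} = (if x \<le> n then {n - x} else {})" by (cases "x \<le> n") auto
  then show ?thesis by (simp add: pmf_map measure_pmf_single)
qed

lemma pmf_conv: "pmf (conv p q) n = (\<Sum>x\<le>n. pmf p x * pmf q (n - x))"
  unfolding conv_def pmf_bind pmf_map_add
  by (subst integral_measure_pmf_real[where A="{..n}"]) (auto split: if_splits intro!: sum.cong)

lemma Poi_add:
  assumes "a \<ge> 0" "b \<ge> 0"
  shows "conv (Poi a) (Poi b) = Poi (a + b)"
proof (rule pmf_eqI)
  fix n
  have "pmf (conv (Poi a) (Poi b)) n = (\<Sum>x\<le>n. a^x / fact x * exp (-a) * (b^(n-x) / fact (n-x) * exp (-b)))"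
    using assms by (simp add: pmf_conv pmf_Poi)
  also have "\<dots> = exp (-(a+b)) * (\<Sum>x\<le>n. a^x * b^(n-x) / (fact x * fact (n-x)))"
    unfolding sum_distrib_left by (intro sum.cong refl) (simp add: exp_add[symmetric] field_simps)
  also have "\<dots> = (\<Sum>x\<le>n. real (n choose x) * a^x * b^(n-x)) / fact n * exp (-(a+b))"
    by (simp add: sum_divide_distrib binomial_fact field_simps)
  also have "\<dots> = pmf (Poi (a+b)) n"
    using assms by (simp add: pmf_Poi binomial_ring)
  finally show "pmf (conv (Poi a) (Poi b)) n = pmf (Poi (a + b)) n" .
qed

lemma conv_alt: "conv p q = bind_pmf p (\<lambda>x. bind_pmf q (\<lambda>y. return_pmf (x + y)))"
  by (simp add: conv_def map_pmf_def)

lemma conv_comm: "conv p q = conv q p"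
  unfolding conv_alt by (subst bind_commute_pmf) (simp add: add.commute)

lemma conv_assoc: "conv (conv p q) r = conv p (conv q r)"
  unfolding conv_alt by (simp add: bind_assoc_pmf bind_return_pmf add.assoc)

lemma conv_return0 [simp]: "conv (return_pmf 0) p = p"
proof -
  have "(+) (0::nat) = id" by auto
  then show ?thesis by (simp add: conv_def bind_return_pmf)
qed

lemma conv_return0' [simp]: "conv p (return_pmf 0) = p"
  by (subst conv_comm) simp

lemma conv_swap: "conv (conv p q) (conv r s) = conv (conv p r) (conv q s)"
  by (metis conv_assoc conv_comm)

primrec convL :: "nat pmf list \<Rightarrow> nat pmf" where
  "convL [] = return_pmf 0"
| "convL (p # ps) = conv p (convL ps)"

definition sdom :: "nat pmf \<Rightarrow> nat pmf \<Rightarrow> bool" where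
  "sdom p q \<longleftrightarrow> (\<forall>k. measure_pmf.prob p {y. k \<le> y} \<le> measure_pmf.prob q {y. k \<le> y})"

lemma sdom_refl: "sdom p p" by (simp add: sdom_def)

lemma sdom_trans: "sdom p q \<Longrightarrow> sdom q r \<Longrightarrow> sdom p r"
  unfolding sdom_def by (meson order_trans)

lemma prob_conv:
  "measure_pmf.prob (conv p r) {y. k \<le> y} = (\<integral>y. measure_pmf.prob p {x. k - y \<le> x} \<partial>r)"
proof -
  have "conv p r = bind_pmf r (\<lambda>y. map_pmf ((+) y) p)"
    by (subst conv_comm) (simp add: conv_def)
  moreover have "measure_pmf.prob (map_pmf ((+) y) p) {y. k \<le> y} = measure_pmf.prob p {x. k - y \<le> x}" for y
    by (simp add: vimage_def) (intro arg_cong[where f="measure_pmf.prob p"], auto)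
  ultimately show ?thesis by (simp add: prob_bind_pmf)
qed

lemma sdom_conv: "sdom p q \<Longrightarrow> sdom (conv p r) (conv q r)"
  unfolding sdom_def prob_conv
  by (auto intro!: integral_mono measure_pmf.integrable_const_bound[where B=1])

lemma sdom_conv2: "sdom p q \<Longrightarrow> sdom p' q' \<Longrightarrow> sdom (conv p p') (conv q q')"
  by (metis sdom_conv sdom_trans conv_comm)

lemma sdom_conv_right: "sdom p (conv p r)"
  unfolding sdom_def prob_conv
proof
  fix k
  have "(\<integral>y. measure_pmf.prob p {y. k \<le> y} \<partial>r) \<le> (\<integral>y. measure_pmf.prob p {x. k - y \<le> x} \<partial>r)"
    by (rule integral_mono) (auto intro!: measure_pmf.integrable_const_bound[where B=1] measure_pmf.finite_measure_mono)
  moreover have "(\<integral>y. measure_pmf.prob p {y. k \<le> y} \<partial>r) = measure_pmf.prob p {y. k \<le> y}"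
    by (simp add: measure_pmf.prob_space)
  ultimately show "measure_pmf.prob p {y. k \<le> y} \<le> (\<integral>y. measure_pmf.prob p {x. k - y \<le> x} \<partial>r)"
    by simp
qed

lemma Poi_mono: "0 \<le> x \<Longrightarrow> x \<le> y \<Longrightarrow> sdom (Poi x) (Poi y)"
  using sdom_conv_right[of "Poi x" "Poi (y - x)"] Poi_add[of x "y - x"] by simp

lemma sdom_convL: "list_all2 sdom ps qs \<Longrightarrow> sdom (convL ps) (convL qs)"
  by (induction ps qs rule: list_all2_induct) (auto intro: sdom_conv2 sdom_refl)

lemma convL_rep_conv: "convL (replicate m (conv p q)) = conv (convL (replicate m p)) (convL (replicate m q))"
  by (induction m) (simp_all add: conv_swap)

lemma convL_rep_Poi: "x \<ge> 0 \<Longrightarrow> convL (replicate m (Poi x)) = Poi (real m * x)"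
proof (induction m)
  case 0
  then show ?case by (simp add: Poi_def)
next
  case (Suc m)
  then show ?case by (simp add: Poi_add algebra_simps)
qed

lemma fact_mult_le: "fact a * fact b \<le> (fact (a + b) :: real)"
proof (induction b)
  case 0 then show ?case by simp
next
  case (Suc b)
  have "fact a * fact (Suc b) = real (Suc b) * (fact a * fact b)" by (simp add: algebra_simps)
  also have "\<dots> \<le> real (Suc b) * fact (a + b)" using Suc by (intro mult_left_mono) auto
  also have "\<dots> \<le> real (Suc (a + b)) * fact (a + b)" by (intro mult_right_mono) auto
  also have "\<dots> = fact (a + Suc b)" by simp
  finally show ?case .
qed

lemma Poi_sums: "t \<ge> 0 \<Longrightarrow> pmf (Poi t) sums 1"
proof -
  assume t: "t \<ge> 0"
  have "(\<lambda>n. t^n /\<^sub>R fact n * exp (-t)) sums (exp t * exp (-t))"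
    by (intro sums_mult2 exp_converges)
  moreover have "pmf (Poi t) = (\<lambda>n. t^n /\<^sub>R fact n * exp (-t))"
    using t by (simp add: pmf_Poi fun_eq_iff divide_inverse)
  ultimately show ?thesis by (simp add: exp_minus)
qed

lemma prob_Poi_ge_sums: "t \<ge> 0 \<Longrightarrow> (\<lambda>n. pmf (Poi t) (n + k)) sums measure_pmf.prob (Poi t) {y. k \<le> y}"
proof -
  assume t: "t \<ge> 0"
  have "measure_pmf.prob (Poi t) {y. k \<le> y} = 1 - measure_pmf.prob (Poi t) {..<k}"
  proof -
    have "{y. k \<le> y} = UNIV - {..<k}" by auto
    then show ?thesis using measure_pmf.prob_compl[of "{..<k}" "Poi t"] by simp
  qed
  also have "\<dots> = 1 - (\<Sum>i<k. pmf (Poi t) i)"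
    by (simp add: measure_measure_pmf_finite)
  finally have *: "measure_pmf.prob (Poi t) {y. k \<le> y} = 1 - (\<Sum>i<k. pmf (Poi t) i)" .
  show ?thesis unfolding * using Poi_sums[OF t]
    by (subst sums_iff_shift) simp
qed

lemma Poi_tail:
  assumes t: "t \<ge> 0" and k: "k \<ge> 1"
  shows "measure_pmf.prob (Poi t) {y. k \<le> y} \<le> (exp t - 1) * pmf (Poi t) (k - 1)"
proof -
  have e: "(\<lambda>n. t^(Suc n) / fact (Suc n)) sums (exp t - 1)"
  proof -
    have "(\<lambda>n. t^n / fact n) sums exp t" using exp_converges[of t] by (simp add: divide_inverse mult.commute)
    then show ?thesis by (subst sums_Suc_iff) simp
  qed
  have S: "(\<lambda>n. pmf (Poi t) (k - 1) * (t^(Suc n) / fact (Suc n))) sums (pmf (Poi t) (k - 1) * (exp t - 1))"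
    by (intro sums_mult e)
  have le: "pmf (Poi t) (n + k) \<le> pmf (Poi t) (k - 1) * (t^(Suc n) / fact (Suc n))" for n
  proof -
    have kk: "n + k = (k - 1) + Suc n" using k by simp
    have "pmf (Poi t) (n + k) = t^(k-1) * t^(Suc n) * exp (-t) / fact ((k - 1) + Suc n)"
      using t by (simp add: pmf_Poi kk power_add)
    also have "\<dots> \<le> t^(k-1) * t^(Suc n) * exp (-t) / (fact (k - 1) * fact (Suc n))"
      by (rule divide_left_mono[OF fact_mult_le]) (simp_all add: t)
    also have "\<dots> = pmf (Poi t) (k - 1) * (t^(Suc n) / fact (Suc n))"
      using t by (simp add: pmf_Poi)
    finally show ?thesis .
  qed
  have "measure_pmf.prob (Poi t) {y. k \<le> y} \<le> pmf (Poi t) (k - 1) * (exp t - 1)"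
    by (rule sums_le[OF _ prob_Poi_ge_sums[OF t] S]) (rule le)
  then show ?thesis by (simp add: mult.commute)
qed

lemma integral_if_pos:
  "(\<integral>y. (if 0 < (y::nat) then B else 0) \<partial>measure_pmf r) = B * measure_pmf.prob r {y. 0 < y}"
proof -
  have "(\<lambda>y. if 0 < (y::nat) then B else 0) = (\<lambda>y. B * indicator {y. 0 < y} y)"
    by (auto simp: fun_eq_iff indicator_def)
  then show ?thesis by simp
qed

lemma prob_pos_Poi: "c \<ge> 0 \<Longrightarrow> measure_pmf.prob (Poi c) {y. 0 < y} = 1 - exp (- c)"
proof -
  assume c: "c \<ge> 0"
  have "{y::nat. 0 < y} = UNIV - {0}" by auto
  then have "measure_pmf.prob (Poi c) {y. 0 < y} = 1 - pmf (Poi c) 0"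
    using measure_pmf.prob_compl[of "{0}" "Poi c"] by (simp add: measure_pmf_single)
  then show ?thesis using c by (simp add: pmf_Poi)
qed

lemma Poi_coupling:
  assumes t: "t \<ge> 0" and c: "c \<ge> 0" and k: "k \<ge> 1"
  shows "measure_pmf.prob (Poi (c + t)) {y. k \<le> y} \<ge>
           measure_pmf.prob (Poi t) {y. k \<le> y} + pmf (Poi t) (k - 1) * (1 - exp (- c))"
proof -
  let ?P = "measure_pmf.prob (Poi t)"
  have split: "?P {x. k - 1 \<le> x} = ?P {y. k \<le> y} + pmf (Poi t) (k - 1)"
  proof -
    have "{x. k - 1 \<le> x} = {y. k \<le> y} \<union> {k - 1}" using k by auto
    moreover have "?P ({y. k \<le> y} \<union> {k - 1}) = ?P {y. k \<le> y} + ?P {k - 1}"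
      using k by (intro measure_pmf.finite_measure_Union) auto
    ultimately show ?thesis by (simp add: measure_pmf_single)
  qed
  have pt: "?P {x. k - y \<le> x} \<ge> ?P {y. k \<le> y} + (if 0 < y then pmf (Poi t) (k - 1) else 0)" for y
  proof (cases "0 < y")
    case True
    then have "?P {x. k - 1 \<le> x} \<le> ?P {x. k - y \<le> x}"
      by (intro measure_pmf.finite_measure_mono) auto
    then show ?thesis using True split by simp
  qed simp
  have "Poi (c + t) = conv (Poi t) (Poi c)" using Poi_add[OF t c] by (simp add: add.commute)
  then have "measure_pmf.prob (Poi (c + t)) {y. k \<le> y} = (\<integral>y. ?P {x. k - y \<le> x} \<partial>Poi c)"
    by (simp add: prob_conv)
  also have "\<dots> \<ge> (\<integral>y. ?P {y. k \<le> y} + (if 0 < y then pmf (Poi t) (k - 1) else 0) \<partial>Poi c)"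
  proof (rule integral_mono[OF _ _ pt])
    have b: "norm (?P {y. k \<le> y} + (if 0 < y then pmf (Poi t) (k - 1) else 0)) \<le> 2" for y
    proof -
      have p1: "?P {y. k \<le> y} \<le> 1" "0 \<le> ?P {y. k \<le> y}" by auto
      have p2: "pmf (Poi t) (k - 1) \<le> 1" "0 \<le> pmf (Poi t) (k - 1)" by (auto simp: pmf_le_1)
      have "norm (?P {y. k \<le> y} + (if 0 < y then pmf (Poi t) (k - 1) else 0))
          = ?P {y. k \<le> y} + (if 0 < y then pmf (Poi t) (k - 1) else 0)"
        unfolding real_norm_def using p1 p2 by (intro abs_of_nonneg) auto
      then show ?thesis using p1 p2 by (cases "0 < y") (simp_all only: if_True if_False; linarith)+
    qed
    show "integrable (measure_pmf (Poi c)) (\<lambda>y. ?P {y. k \<le> y} + (if 0 < y then pmf (Poi t) (k - 1) else 0))"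
      by (rule measure_pmf.integrable_const_bound[where B=2]) (rule AE_I2, rule b, simp)
    show "integrable (measure_pmf (Poi c)) (\<lambda>y. ?P {x. k - y \<le> x})"
      by (rule measure_pmf.integrable_const_bound[where B=1]) auto
  qed
  also have "(\<integral>y. ?P {y. k \<le> y} + (if 0 < y then pmf (Poi t) (k - 1) else 0) \<partial>Poi c)
      = ?P {y. k \<le> y} + pmf (Poi t) (k - 1) * (1 - exp (- c))"
  proof -
    have i1: "integrable (measure_pmf (Poi c)) (\<lambda>y. ?P {y. k \<le> y})" by simp
    have i2: "integrable (measure_pmf (Poi c)) (\<lambda>y. (if 0 < y then pmf (Poi t) (k - 1) else 0))"
      by (rule measure_pmf.integrable_const_bound[where B=1]) (auto simp: pmf_le_1)
    show ?thesis
      by (subst Bochner_Integration.integral_add[OF i1 i2]) (simp add: integral_if_pos prob_pos_Poi c measure_pmf.prob_space)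
  qed
  finally show ?thesis .
qed

lemma conv_bind_right: "conv p (bind_pmf A f) = bind_pmf A (\<lambda>z. conv p (f z))"
  unfolding conv_def map_bind_pmf by (rule bind_commute_pmf)

definition Mk :: "real \<Rightarrow> real \<Rightarrow> nat pmf" where
  "Mk a t = bind_pmf (Poi (a + t)) (\<lambda>z. if 0 < z then Poi t else return_pmf 0)"

lemma key_real:
  fixes P P2 m a t c :: real
  assumes "a \<ge> 0" "t \<ge> 0" "c \<ge> 0" "exp (-a) \<le> (1 - exp (-a)) * (1 - exp (-c))"
    and "P \<le> (exp t - 1) * m" "P2 \<ge> P + m * (1 - exp (-c))" "m \<ge> 0"
  shows "P \<le> P2 * (1 - exp (-(a + t)))"
proof -
  let ?q = "exp (-(a+t))"
  have q: "?q = exp (-a) * exp (-t)" by (simp add: exp_add[symmetric])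
  have et: "exp (-t) * exp t = 1" by (simp add: exp_minus field_simps)
  have ec: "0 \<le> 1 - exp (-c)" using assms by simp
  have qle: "?q \<le> exp (-a)" using assms by simp
  have "?q * P \<le> ?q * ((exp t - 1) * m)"
    using assms by (intro mult_left_mono) auto
  also have "\<dots> = exp (-a) * (1 - exp (-t)) * m" using q et by (simp add: algebra_simps)
  also have "\<dots> \<le> exp (-a) * m"
    using assms by (intro mult_right_mono) (auto simp: mult_left_le)
  also have "\<dots> \<le> (1 - exp (-a)) * (1 - exp (-c)) * m"
    using assms by (intro mult_right_mono) auto
  also have "\<dots> \<le> (1 - ?q) * (1 - exp (-c)) * m"
    using assms ec qle by (intro mult_right_mono) auto
  finally have A: "?q * P \<le> (1 - ?q) * (1 - exp (-c)) * m" .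
  have B: "(1 - ?q) * (P + m * (1 - exp (-c))) \<le> (1 - ?q) * P2"
    using assms qle by (intro mult_left_mono) auto
  from A B show ?thesis by (simp add: algebra_simps)
qed

lemma key_sdom:
  assumes a: "a \<ge> 0" and t: "t \<ge> 0" and c: "c \<ge> 0"
    and h: "exp (-a) \<le> (1 - exp (-a)) * (1 - exp (-c))"
  shows "sdom (Poi t) (conv (Poi c) (Mk a t))"
  unfolding sdom_def
proof
  fix k :: nat
  show "measure_pmf.prob (Poi t) {y. k \<le> y} \<le> measure_pmf.prob (conv (Poi c) (Mk a t)) {y. k \<le> y}"
  proof (cases "k = 0")
    case True then show ?thesis by simp
  next
    case False
    then have k: "k \<ge> 1" by simp
    let ?F = "\<lambda>z::nat. if 0 < z then Poi (c + t) else Poi c"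
    have eq: "conv (Poi c) (Mk a t) = bind_pmf (Poi (a + t)) ?F"
      unfolding Mk_def conv_bind_right
      by (intro bind_pmf_cong refl) (simp add: Poi_add c t)
    have "measure_pmf.prob (conv (Poi c) (Mk a t)) {y. k \<le> y}
        = (\<integral>z. measure_pmf.prob (?F z) {y. k \<le> y} \<partial>Poi (a + t))"
      unfolding eq prob_bind_pmf ..
    also have "\<dots> \<ge> (\<integral>z. (if 0 < z then measure_pmf.prob (Poi (c + t)) {y. k \<le> y} else 0) \<partial>Poi (a + t))"
    proof (rule integral_mono)
      show "integrable (measure_pmf (Poi (a + t))) (\<lambda>z. measure_pmf.prob (?F z) {y. k \<le> y})"
        by (rule measure_pmf.integrable_const_bound[where B=1]) auto
      show "integrable (measure_pmf (Poi (a + t))) (\<lambda>z. (if 0 < z then measure_pmf.prob (Poi (c + t)) {y. k \<le> y} else 0))"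
        by (rule measure_pmf.integrable_const_bound[where B=1]) auto
    qed auto
    also have "(\<integral>z. (if 0 < z then measure_pmf.prob (Poi (c + t)) {y. k \<le> y} else 0) \<partial>Poi (a + t))
        = measure_pmf.prob (Poi (c + t)) {y. k \<le> y} * (1 - exp (-(a + t)))"
      using a t by (simp add: integral_if_pos prob_pos_Poi)
    finally have R: "measure_pmf.prob (Poi (c + t)) {y. k \<le> y} * (1 - exp (-(a + t)))
       \<le> measure_pmf.prob (conv (Poi c) (Mk a t)) {y. k \<le> y}" .
    have "measure_pmf.prob (Poi t) {y. k \<le> y} \<le> measure_pmf.prob (Poi (c + t)) {y. k \<le> y} * (1 - exp (-(a + t)))"
      by (rule key_real[OF a t c h Poi_tail[OF t k] Poi_coupling[OF t c k]]) (simp add: pmf_nonneg)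
    with R show ?thesis by linarith
  qed
qed

lemma pmf_map_Cons: "pmf (map_pmf (Cons x) q) (y # ys) = (if x = y then pmf q ys else 0)"
proof (cases "x = y")
  case True
  then show ?thesis by (simp add: pmf_map_inj')
next
  case False
  then have "Cons x -` {y # ys} = {}" by auto
  then show ?thesis using False by (simp add: pmf_map)
qed

lemma pmf_seq_Cons: "pmf (seq_pmf (p # ps)) (y # ys) = pmf p y * pmf (seq_pmf ps) ys"
  by (simp add: pmf_bind pmf_map_Cons integral_measure_pmf_real[where A="{y}"] split: if_splits)

lemma pmf_seq_Cons_Nil: "pmf (seq_pmf (p # ps)) [] = 0"
proof -
  have "pmf (map_pmf (Cons x) q) [] = 0" for x and q :: "'a list pmf"
  proof -
    have "Cons x -` {[]} = {}" by auto
    then show ?thesis by (simp add: pmf_map)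
  qed
  then show ?thesis by (simp add: pmf_bind)
qed

lemma set_iid_list: "w \<in> set_pmf (iid_list n p) \<Longrightarrow> length w = n \<and> set w \<subseteq> set_pmf p"
  by (induction n arbitrary: w) (fastforce simp: iid_list_def)+

lemma iid_list_Suc: "iid_list (Suc n) p = bind_pmf p (\<lambda>x. map_pmf (Cons x) (iid_list n p))"
  by (simp add: iid_list_def)

lemma pmf_iid_of_set:
  assumes "finite S" "S \<noteq> {}"
  shows "pmf (iid_list n (pmf_of_set S)) w =
           (if length w = n \<and> set w \<subseteq> S then (1 / real (card S)) ^ n else 0)"
proof (induction n arbitrary: w)
  case 0
  then show ?case by (cases w) (auto simp: iid_list_def)
next
  case (Suc n)
  show ?case
  proof (cases w)
    case Nil
    then show ?thesis using pmf_seq_Cons_Nil[of "pmf_of_set S" "replicate n (pmf_of_set S)"]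
      by (simp add: iid_list_def)
  next
    case (Cons y ys)
    have "pmf (iid_list (Suc n) (pmf_of_set S)) w = pmf (pmf_of_set S) y * pmf (iid_list n (pmf_of_set S)) ys"
      unfolding Cons iid_list_def using pmf_seq_Cons[of "pmf_of_set S" "replicate n (pmf_of_set S)" y ys]
      by simp
    then show ?thesis using assms Suc.IH[of ys] Cons by (auto simp: indicator_def)
  qed
qed

lemma size_sum_mset_fin: "finite S \<Longrightarrow> size (\<Sum>j\<in>S. (F j :: 'a multiset)) = (\<Sum>j\<in>S. size (F j))"
  by (induction S rule: finite_induct) auto

lemma thin:
  fixes S :: "'a set"
  assumes S: "finite S" "S \<noteq> {}" and r: "r \<ge> 0"
  shows "bind_pmf (Poi r) (\<lambda>X. map_pmf (\<lambda>W j. count (mset W) j) (iid_list X (pmf_of_set S)))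
           = Pi_pmf S 0 (\<lambda>_. Poi (r / card S))"
proof (rule pmf_eqI)
  fix f :: "'a \<Rightarrow> nat"
  let ?U = "pmf_of_set S"
  let ?n = "card S"
  let ?cnt = "\<lambda>W j. count (mset W) j"
  let ?K = "\<lambda>X. map_pmf ?cnt (iid_list X ?U)"
  have n0: "?n > 0" using S by (simp add: card_gt_0_iff)
  show "pmf (bind_pmf (Poi r) ?K) f = pmf (Pi_pmf S 0 (\<lambda>_. Poi (r / card S))) f"
  proof (cases "\<forall>x. x \<notin> S \<longrightarrow> f x = 0")
    case False
    have "pmf (?K X) f = 0" for X
    proof -
      have "f \<notin> set_pmf (?K X)"
      proof
        assume "f \<in> set_pmf (?K X)"
        then obtain W where W: "W \<in> set_pmf (iid_list X ?U)" "f = ?cnt W" by auto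
        then have "set W \<subseteq> S" using set_iid_list[OF W(1)] S by simp
        then have "\<forall>x. x \<notin> S \<longrightarrow> f x = 0" using W(2) by (auto simp: count_eq_zero_iff)
        then show False using False by simp
      qed
      then show ?thesis by (simp add: pmf_eq_0_set_pmf)
    qed
    then show ?thesis using False S by (auto simp: pmf_bind pmf_Pi)
  next
    case True
    define M where "M = (\<Sum>j\<in>S. replicate_mset (f j) j)"
    have cM: "count M j = f j" for j
      using True S by (simp add: M_def count_sum)
    define N where "N = size M"
    have N: "N = (\<Sum>j\<in>S. f j)" unfolding N_def M_def using S by (simp add: size_sum_mset_fin)
    have setM: "set_mset M \<subseteq> S" using True cM by (auto simp: count_eq_zero_iff[symmetric]) (metis cM count_eq_zero_iff)
    have ev: "?cnt -` {f} = permutations_of_multiset M"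
      by (auto simp: permutations_of_multiset_def fun_eq_iff cM multiset_eq_iff)
    have pK: "pmf (?K X) f = (if X = N then real (card (permutations_of_multiset M)) * (1 / ?n) ^ N else 0)" for X
    proof -
      have "pmf (?K X) f = measure_pmf.prob (iid_list X ?U) (permutations_of_multiset M)"
        by (simp add: pmf_map ev)
      also have "\<dots> = (\<Sum>w\<in>permutations_of_multiset M. pmf (iid_list X ?U) w)"
        by (simp add: measure_measure_pmf_finite)
      also have "\<dots> = (\<Sum>w\<in>permutations_of_multiset M. (if X = N then (1 / ?n) ^ N else 0))"
      proof (intro sum.cong refl)
        fix w assume "w \<in> permutations_of_multiset M"
        then have "mset w = M" by (simp add: permutations_of_multiset_def)
        then have "length w = N" "set w \<subseteq> S" using setM unfolding N_def
          by (auto simp flip: size_mset set_mset_mset)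
        then show "pmf (iid_list X ?U) w = (if X = N then (1 / ?n) ^ N else 0)"
          using S by (auto simp: pmf_iid_of_set)
      qed
      also have "\<dots> = (if X = N then real (card (permutations_of_multiset M)) * (1 / ?n) ^ N else 0)"
        by simp
      finally show ?thesis .
    qed
    have LHS: "pmf (bind_pmf (Poi r) ?K) f = pmf (Poi r) N * (real (card (permutations_of_multiset M)) * (1 / ?n) ^ N)"
      by (simp add: pmf_bind pK integral_measure_pmf_real[where A="{N}"] split: if_splits)
    have fa: "real (card (permutations_of_multiset M)) * (\<Prod>j\<in>S. fact (f j)) = fact N"
    proof -
      have "(\<Prod>x\<in>set_mset M. fact (count M x) :: nat) = (\<Prod>j\<in>S. fact (f j))"
        unfolding cM
      proof (rule prod.mono_neutral_left[OF S(1) setM])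
        show "\<forall>i\<in>S - set_mset M. fact (f i) = (1::nat)"
          by (metis DiffD2 cM count_eq_zero_iff fact_0)
      qed
      then have "card (permutations_of_multiset M) * (\<Prod>j\<in>S. fact (f j) :: nat) = fact N"
        using card_permutations_of_multiset_aux[of M] by (simp add: N_def)
      then have "real (card (permutations_of_multiset M) * (\<Prod>j\<in>S. fact (f j) :: nat)) = fact N"
        by (metis of_nat_fact)
      then show ?thesis by (simp add: of_nat_prod)
    qed
    have RHS: "pmf (Pi_pmf S 0 (\<lambda>_. Poi (r / card S))) f = (r / ?n) ^ N / (\<Prod>j\<in>S. fact (f j)) * exp (- r)"
    proof -
      have "pmf (Pi_pmf S 0 (\<lambda>_. Poi (r / card S))) f = (\<Prod>j\<in>S. (r / ?n) ^ f j / fact (f j) * exp (- (r / ?n)))"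
        using S True r by (simp add: pmf_Pi pmf_Poi)
      also have "\<dots> = (\<Prod>j\<in>S. (r / ?n) ^ f j) / (\<Prod>j\<in>S. fact (f j)) * exp (- (r / ?n)) ^ ?n"
        by (simp add: prod.distrib prod_dividef)
      also have "exp (- (r / ?n)) ^ ?n = exp (- r)"
        using n0 by (simp add: exp_of_nat_mult[symmetric])
      also have "(\<Prod>j\<in>S. (r / ?n) ^ f j) = (r / ?n) ^ N"
        by (simp add: N power_sum)
      finally show ?thesis .
    qed
    have P0: "(\<Prod>j\<in>S. fact (f j) :: real) > 0" by (intro prod_pos) auto
    have C0: "real (card (permutations_of_multiset M)) > 0"
      by (simp add: card_gt_0_iff)
    show ?thesis unfolding LHS RHS using r P0 C0 n0
      by (simp add: pmf_Poi fa[symmetric] field_simps power_divide)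
  qed
qed

lemma seq_conv:
  "bind_pmf (iid_list m P) (\<lambda>ms. map_pmf (\<lambda>Ws. count (mset (concat Ws)) z)
      (seq_pmf (map (\<lambda>k. G k (ms ! (k - s))) [s..<s+m])))
   = convL (map (\<lambda>k. bind_pmf P (\<lambda>x. map_pmf (\<lambda>W. count (mset W) z) (G k x))) [s..<s+m])"
proof (induction m arbitrary: s)
  case 0
  then show ?case by (simp add: iid_list_def)
next
  case (Suc m)
  have up: "[s..<s + Suc m] = s # [Suc s..<Suc s + m]" by (simp add: upt_rec)
  have cong: "map (\<lambda>k. G k ((x # ms) ! (k - s))) [Suc s..<Suc s + m] = map (\<lambda>k. G k (ms ! (k - Suc s))) [Suc s..<Suc s + m]"
    for x ms by (intro map_cong refl) (auto simp: nth_Cons' numeral_2_eq_2)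
  have "bind_pmf (iid_list (Suc m) P) (\<lambda>ms. map_pmf (\<lambda>Ws. count (mset (concat Ws)) z)
      (seq_pmf (map (\<lambda>k. G k (ms ! (k - s))) [s..<s+Suc m])))
    = bind_pmf P (\<lambda>x. bind_pmf (iid_list m P) (\<lambda>ms. bind_pmf (G s x) (\<lambda>w.
        map_pmf (\<lambda>Ws. count (mset w) z + count (mset (concat Ws)) z)
          (seq_pmf (map (\<lambda>k. G k (ms ! (k - Suc s))) [Suc s..<Suc s + m])))))"
  proof -
    have "bind_pmf (iid_list (Suc m) P) (\<lambda>ms. map_pmf (\<lambda>Ws. count (mset (concat Ws)) z)
      (seq_pmf (map (\<lambda>k. G k (ms ! (k - s))) [s..<s+Suc m])))
      = bind_pmf P (\<lambda>x. bind_pmf (iid_list m P) (\<lambda>ms. bind_pmf (G s x) (\<lambda>w.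
        map_pmf (\<lambda>Ws. count (mset (concat (w # Ws))) z)
          (seq_pmf (map (\<lambda>k. G k ((x # ms) ! (k - s))) [Suc s..<Suc s + m])))))"
      by (simp only: iid_list_Suc up list.map seq_pmf.simps bind_assoc_pmf bind_map_pmf map_bind_pmf
          pmf.map_comp o_def diff_self_eq_0 nth_Cons_0)
    also have "\<dots> = bind_pmf P (\<lambda>x. bind_pmf (iid_list m P) (\<lambda>ms. bind_pmf (G s x) (\<lambda>w.
        map_pmf (\<lambda>Ws. count (mset w) z + count (mset (concat Ws)) z)
          (seq_pmf (map (\<lambda>k. G k (ms ! (k - Suc s))) [Suc s..<Suc s + m])))))"
      by (simp only: cong concat.simps mset_append count_union)
    finally show ?thesis .
  qed
  also have "\<dots> = bind_pmf P (\<lambda>x. bind_pmf (G s x) (\<lambda>w. map_pmf ((+) (count (mset w) z))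
        (bind_pmf (iid_list m P) (\<lambda>ms. map_pmf (\<lambda>Ws. count (mset (concat Ws)) z)
          (seq_pmf (map (\<lambda>k. G k (ms ! (k - Suc s))) [Suc s..<Suc s + m]))))))"
    by (subst bind_commute_pmf) (simp add: map_bind_pmf pmf.map_comp o_def)
  also have "\<dots> = bind_pmf P (\<lambda>x. bind_pmf (G s x) (\<lambda>w. map_pmf ((+) (count (mset w) z))
        (convL (map (\<lambda>k. bind_pmf P (\<lambda>x. map_pmf (\<lambda>W. count (mset W) z) (G k x))) [Suc s..<Suc s+m]))))"
    by (simp only: Suc.IH)
  also have "\<dots> = convL (map (\<lambda>k. bind_pmf P (\<lambda>x. map_pmf (\<lambda>W. count (mset W) z) (G k x))) [s..<s+Suc m])"
    unfolding up by (simp add: conv_def bind_assoc_pmf bind_map_pmf)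
  finally show ?case .
qed

lemma conv_bind_left: "conv (bind_pmf A F) q = bind_pmf A (\<lambda>x. conv (F x) q)"
  unfolding conv_def by (simp add: bind_assoc_pmf)

lemma Pi_conv:
  "bind_pmf (Pi_pmf {s..<s+m} dflt (\<lambda>_. A)) (\<lambda>g0. bind_pmf (Pi_pmf {s..<s+m} dflt (\<lambda>_. B))
      (\<lambda>g1. convL (map (\<lambda>k. H (g0 k) (g1 k)) [s..<s+m])))
   = convL (replicate m (bind_pmf A (\<lambda>x. bind_pmf B (\<lambda>y. H x y))))"
proof (induction m arbitrary: s)
  case 0
  then show ?case by simp
next
  case (Suc m)
  let ?T = "{Suc s..<Suc s + m}"
  have up: "[s..<s + Suc m] = s # [Suc s..<Suc s + m]" by (simp add: upt_rec)
  have ins: "{s..<s + Suc m} = insert s ?T" by auto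
  have nin: "s \<notin> ?T" by simp
  have mc: "map (\<lambda>k. H ((f0(s:=y0)) k) ((f1(s:=y1)) k)) [Suc s..<Suc s + m]
      = map (\<lambda>k. H (f0 k) (f1 k)) [Suc s..<Suc s + m]" for f0 f1 :: "nat \<Rightarrow> 'a" and y0 y1
    by (intro map_cong refl) auto
  have "bind_pmf (Pi_pmf {s..<s+Suc m} dflt (\<lambda>_. A)) (\<lambda>g0. bind_pmf (Pi_pmf {s..<s+Suc m} dflt (\<lambda>_. B))
      (\<lambda>g1. convL (map (\<lambda>k. H (g0 k) (g1 k)) [s..<s+Suc m])))
    = bind_pmf A (\<lambda>y0. bind_pmf (Pi_pmf ?T dflt (\<lambda>_. A)) (\<lambda>f0. bind_pmf B (\<lambda>y1.
        bind_pmf (Pi_pmf ?T dflt (\<lambda>_. B)) (\<lambda>f1. conv (H y0 y1) (convL (map (\<lambda>k. H (f0 k) (f1 k)) [Suc s..<Suc s + m]))))))"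
    unfolding ins up Pi_pmf_insert'[OF finite_atLeastLessThan nin]
    by (simp only: bind_assoc_pmf bind_return_pmf list.map convL.simps fun_upd_same mc)
  also have "\<dots> = bind_pmf A (\<lambda>y0. bind_pmf B (\<lambda>y1. conv (H y0 y1) (bind_pmf (Pi_pmf ?T dflt (\<lambda>_. A)) (\<lambda>f0.
        bind_pmf (Pi_pmf ?T dflt (\<lambda>_. B)) (\<lambda>f1. convL (map (\<lambda>k. H (f0 k) (f1 k)) [Suc s..<Suc s + m]))))))"
    unfolding conv_bind_right by (intro bind_pmf_cong refl, rule bind_commute_pmf)
  also have "\<dots> = convL (replicate (Suc m) (bind_pmf A (\<lambda>x. bind_pmf B (\<lambda>y. H x y))))"
    by (simp only: Suc.IH[of "Suc s"] replicate_Suc convL.simps conv_bind_left bind_assoc_pmf)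
  finally show ?case .
qed

lemma iid_list_map: "iid_list n (map_pmf f p) = map_pmf (map f) (iid_list n p)"
  by (induction n) (simp_all add: iid_list_def bind_map_pmf map_bind_pmf pmf.map_comp o_def)

lemma len_filter0: "length (filter (\<lambda>j. j = 0) xs) = count (mset xs) (0::nat)"
  by (induction xs) auto

definition Q1 :: "nat \<Rightarrow> real \<Rightarrow> real \<Rightarrow> nat pmf" where
  "Q1 d \<mu> lam = bind_pmf (Poi \<mu>) (\<lambda>X. bind_pmf (iid_list d (Poi lam)) (\<lambda>ns.
     bind_pmf (iid_list X (pmf_of_set {0..d})) (\<lambda>W0.
     bind_pmf (iid_list (ns ! 0) (pmf_of_set ({0..d} - {1}))) (\<lambda>W1.
     map_pmf (\<lambda>Ws. count (mset W0) 0 + count (mset W1) 0 + count (mset (concat Ws)) 0)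
       (seq_pmf (map (\<lambda>i. if i \<in> set W0 \<or> i \<in> set W1
            then iid_list (ns ! (i - 1)) (pmf_of_set ({0..d} - {i})) else return_pmf []) [2..<d+1]))))))"

lemma opA_eq:
  assumes d: "d \<ge> 1"
  shows "opA d \<mu> (PoiE lam) = map_pmf enat (Q1 d \<mu> lam)"
proof -
  have inner: "(let act = (\<lambda>i. i \<in> set W0 \<or> i \<in> set W1) in
        if (\<exists>i\<in>{2..d}. act i \<and> map enat ns ! (i - 1) = \<infinity>) then return_pmf \<infinity> else
        bind_pmf (seq_pmf (map (\<lambda>i. if act i
                   then iid_list (the_enat (map enat ns ! (i - 1))) (pmf_of_set ({0..d} - {i}))
                   else return_pmf []) [2..<d+1])) (\<lambda>Ws.
        return_pmf (enat (length (filter (\<lambda>j. j = 0) (W0 @ W1 @ concat Ws))))))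
      = map_pmf enat (map_pmf (\<lambda>Ws. count (mset W0) 0 + count (mset W1) 0 + count (mset (concat Ws)) 0)
       (seq_pmf (map (\<lambda>i. if i \<in> set W0 \<or> i \<in> set W1
            then iid_list (ns ! (i - 1)) (pmf_of_set ({0..d} - {i})) else return_pmf []) [2..<d+1])))"
    if ns: "length ns = d" for ns :: "nat list" and W0 W1 :: "nat list"
  proof -
    have nf: "\<not> (\<exists>i\<in>{2..d}. (i \<in> set W0 \<or> i \<in> set W1) \<and> map enat ns ! (i - 1) = \<infinity>)" using ns by auto
    have aux: "bind_pmf M (\<lambda>Ws. return_pmf (enat (length (filter (\<lambda>j. j = 0) (W0 @ W1 @ concat Ws)))))
       = map_pmf enat (map_pmf (\<lambda>Ws. count (mset W0) 0 + count (mset W1) 0 + count (mset (concat Ws)) 0) M)" for M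
      by (simp add: map_pmf_def bind_assoc_pmf bind_return_pmf len_filter0 add.assoc)
    have meq: "map (\<lambda>i. if i \<in> set W0 \<or> i \<in> set W1
                   then iid_list (the_enat (map enat ns ! (i - 1))) (pmf_of_set ({0..d} - {i}))
                   else return_pmf []) [2..<d+1]
        = map (\<lambda>i. if i \<in> set W0 \<or> i \<in> set W1
            then iid_list (ns ! (i - 1)) (pmf_of_set ({0..d} - {i})) else return_pmf []) [2..<d+1]"
      using ns by (intro map_cong refl) auto
    show ?thesis
      unfolding Let_def by (simp only: if_not_P[OF nf] meq aux)
  qed
  have "opA d \<mu> (PoiE lam) = bind_pmf (Poi \<mu>) (\<lambda>X. bind_pmf (iid_list d (Poi lam)) (\<lambda>ns.
     bind_pmf (iid_list X (pmf_of_set {0..d})) (\<lambda>W0.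
     bind_pmf (iid_list (ns ! 0) (pmf_of_set ({0..d} - {1}))) (\<lambda>W1.
     map_pmf enat (map_pmf (\<lambda>Ws. count (mset W0) 0 + count (mset W1) 0 + count (mset (concat Ws)) 0)
       (seq_pmf (map (\<lambda>i. if i \<in> set W0 \<or> i \<in> set W1
            then iid_list (ns ! (i - 1)) (pmf_of_set ({0..d} - {i})) else return_pmf []) [2..<d+1])))))))"
    unfolding opA_def PoiE_def iid_list_map bind_map_pmf
    apply (intro bind_pmf_cong refl)
    subgoal premises p for X ns
    proof -
      have ns: "length ns = d" using set_iid_list p by blast
      then have n0: "map enat ns ! 0 = enat (ns ! 0)" using d by simp
      have nI: "(enat (ns ! 0) = \<infinity>) = False" by simp
      show ?thesis
        unfolding n0 the_enat.simps nI if_False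
        by (intro bind_pmf_cong refl, rule inner[OF ns])
    qed
    done

  also have "\<dots> = map_pmf enat (Q1 d \<mu> lam)"
    unfolding Q1_def by (simp add: map_bind_pmf)
  finally show ?thesis .
qed

declare upt_Suc[simp del]

lemma Q1_step1:
  "Q1 (Suc d') \<mu> lam = bind_pmf (Poi \<mu>) (\<lambda>X. bind_pmf (Poi lam) (\<lambda>n1.
     bind_pmf (iid_list d' (Poi lam)) (\<lambda>ms.
     bind_pmf (iid_list X (pmf_of_set {0..Suc d'})) (\<lambda>W0.
     bind_pmf (iid_list n1 (pmf_of_set ({0..Suc d'} - {1}))) (\<lambda>W1.
     map_pmf (\<lambda>Ws. count (mset W0) 0 + count (mset W1) 0 + count (mset (concat Ws)) 0)
       (seq_pmf (map (\<lambda>i. if i \<in> set W0 \<or> i \<in> set W1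
            then iid_list (ms ! (i - 2)) (pmf_of_set ({0..Suc d'} - {i})) else return_pmf []) [2..<2+d'])))))))"
proof -
  have e: "[2..<Suc d' + 1] = [2..<2+d']" by simp
  show ?thesis
    unfolding Q1_def iid_list_Suc bind_map_pmf bind_assoc_pmf e
  proof (intro bind_pmf_cong refl)
    fix X n1 ms W0 W1
    show "map_pmf (\<lambda>Ws. count (mset W0) 0 + count (mset W1) 0 + count (mset (concat Ws)) 0)
       (seq_pmf (map (\<lambda>i. if i \<in> set W0 \<or> i \<in> set W1
            then iid_list ((n1 # ms) ! (i - 1)) (pmf_of_set ({0..Suc d'} - {i})) else return_pmf []) [2..<2+d']))
       = map_pmf (\<lambda>Ws. count (mset W0) 0 + count (mset W1) 0 + count (mset (concat Ws)) 0)
       (seq_pmf (map (\<lambda>i. if i \<in> set W0 \<or> i \<in> set W1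
            then iid_list (ms ! (i - 2)) (pmf_of_set ({0..Suc d'} - {i})) else return_pmf []) [2..<2+d']))"
      by (intro arg_cong[where f="\<lambda>L. map_pmf _ (seq_pmf L)"] map_cong refl) (auto simp: nth_Cons' numeral_2_eq_2)
  qed (simp add: nth_Cons')
qed

lemma comm3: "bind_pmf A (\<lambda>x. bind_pmf B (\<lambda>y. bind_pmf C (\<lambda>z. F x y z)))
   = bind_pmf B (\<lambda>y. bind_pmf C (\<lambda>z. bind_pmf A (\<lambda>x. F x y z)))"
  by (subst bind_commute_pmf) (intro bind_pmf_cong refl, rule bind_commute_pmf)

lemma thin0:
  assumes "finite S" "0 \<in> S" "r \<ge> 0"
  shows "bind_pmf (Poi r) (\<lambda>x. map_pmf (\<lambda>W. count (mset W) (0::nat)) (iid_list x (pmf_of_set S))) = Poi (r / card S)"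
proof -
  have "bind_pmf (Poi r) (\<lambda>x. map_pmf (\<lambda>W. count (mset W) (0::nat)) (iid_list x (pmf_of_set S)))
     = map_pmf (\<lambda>f. f 0) (bind_pmf (Poi r) (\<lambda>X. map_pmf (\<lambda>W j. count (mset W) j) (iid_list X (pmf_of_set S))))"
    by (simp add: map_bind_pmf pmf.map_comp o_def)
  also have "\<dots> = map_pmf (\<lambda>f. f 0) (Pi_pmf S 0 (\<lambda>_. Poi (r / card S)))"
    using assms by (subst thin) auto
  also have "\<dots> = Poi (r / card S)"
    using assms by (simp add: Pi_pmf_component)
  finally show ?thesis .
qed

lemma inner_Ws:
  assumes lam: "lam \<ge> 0"
  shows "bind_pmf (iid_list d' (Poi lam)) (\<lambda>ms.
     map_pmf (\<lambda>Ws. count (mset W0) 0 + count (mset W1) 0 + count (mset (concat Ws)) 0)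
       (seq_pmf (map (\<lambda>i. if i \<in> set W0 \<or> i \<in> set W1
            then iid_list (ms ! (i - 2)) (pmf_of_set ({0..Suc d'} - {i})) else return_pmf []) [2..<2+d'])))
   = map_pmf ((+) (count (mset W0) 0 + count (mset W1) (0::nat)))
       (convL (map (\<lambda>k. if 0 < count (mset W0) k + count (mset W1) k then Poi (lam / real (Suc d')) else return_pmf 0) [2..<2+d']))"
proof -
  let ?G = "\<lambda>i x. if i \<in> set W0 \<or> i \<in> set W1
            then iid_list x (pmf_of_set ({0..Suc d'} - {i})) else return_pmf []"
  have "bind_pmf (iid_list d' (Poi lam)) (\<lambda>ms.
     map_pmf (\<lambda>Ws. count (mset W0) 0 + count (mset W1) 0 + count (mset (concat Ws)) 0)
       (seq_pmf (map (\<lambda>i. ?G i (ms ! (i - 2))) [2..<2+d'])))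
     = map_pmf ((+) (count (mset W0) 0 + count (mset W1) (0::nat))) (bind_pmf (iid_list d' (Poi lam)) (\<lambda>ms.
       map_pmf (\<lambda>Ws. count (mset (concat Ws)) 0) (seq_pmf (map (\<lambda>i. ?G i (ms ! (i - 2))) [2..<2+d']))))"
    by (simp add: map_bind_pmf pmf.map_comp o_def add.assoc)
  also have "\<dots> = map_pmf ((+) (count (mset W0) 0 + count (mset W1) (0::nat)))
     (convL (map (\<lambda>k. bind_pmf (Poi lam) (\<lambda>x. map_pmf (\<lambda>W. count (mset W) 0) (?G k x))) [2..<2+d']))"
    by (subst seq_conv) (rule refl)
  also have "map (\<lambda>k. bind_pmf (Poi lam) (\<lambda>x. map_pmf (\<lambda>W. count (mset W) (0::nat)) (?G k x))) [2..<2+d']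
      = map (\<lambda>k. if 0 < count (mset W0) k + count (mset W1) k then Poi (lam / real (Suc d')) else return_pmf 0) [2..<2+d']"
  proof (intro map_cong refl)
    fix k assume k: "k \<in> set [2..<2+d']"
    have c: "card ({0..Suc d'} - {k}) = Suc d'" using k by auto
    have eqv: "(k \<in> set W0 \<or> k \<in> set W1) = (0 < count (mset W0) k + count (mset W1) k)" by auto
    show "bind_pmf (Poi lam) (\<lambda>x. map_pmf (\<lambda>W. count (mset W) 0) (?G k x))
      = (if 0 < count (mset W0) k + count (mset W1) k then Poi (lam / real (Suc d')) else return_pmf 0)"
      unfolding eqv[symmetric] using k lam thin0[of "{0..Suc d'} - {k}" lam] c by auto
  qed
  finally show ?thesis .
qed

lemma Q1_step2:
  assumes lam: "lam \<ge> 0" and mu: "\<mu> \<ge> 0"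
  shows "Q1 (Suc d') \<mu> lam = bind_pmf (Pi_pmf {0..Suc d'} 0 (\<lambda>_. Poi (\<mu> / real (card {0..Suc d'}))))
    (\<lambda>c0. bind_pmf (Pi_pmf ({0..Suc d'} - {1}) 0 (\<lambda>_. Poi (lam / real (card ({0..Suc d'} - {1})))))
    (\<lambda>c1. map_pmf ((+) (c0 0 + c1 0))
       (convL (map (\<lambda>k. if 0 < c0 k + c1 k then Poi (lam / real (Suc d')) else return_pmf 0) [2..<2+d']))))"
proof -
  let ?E = "\<lambda>c0 c1. map_pmf ((+) (c0 0 + c1 0))
       (convL (map (\<lambda>k. if 0 < c0 k + c1 k then Poi (lam / real (Suc d')) else return_pmf 0) [2..<2+d']))"
  let ?U0 = "pmf_of_set {0..Suc d'}"
  let ?U1 = "pmf_of_set ({0..Suc d'} - {1})"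
  let ?cnt = "\<lambda>W j. count (mset W) (j::nat)"
  have "Q1 (Suc d') \<mu> lam = bind_pmf (Poi \<mu>) (\<lambda>X. bind_pmf (Poi lam) (\<lambda>n1.
     bind_pmf (iid_list X ?U0) (\<lambda>W0. bind_pmf (iid_list n1 ?U1) (\<lambda>W1. ?E (?cnt W0) (?cnt W1)))))"
    unfolding Q1_step1
    apply (rule bind_pmf_cong[OF refl])
    apply (rule bind_pmf_cong[OF refl])
    apply (subst comm3)
    apply (simp only: inner_Ws[OF lam])
    done
  also have "\<dots> = bind_pmf (Poi \<mu>) (\<lambda>X. bind_pmf (iid_list X ?U0) (\<lambda>W0.
     bind_pmf (Poi lam) (\<lambda>n1. bind_pmf (iid_list n1 ?U1) (\<lambda>W1. ?E (?cnt W0) (?cnt W1)))))"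
    by (rule bind_pmf_cong[OF refl], rule bind_commute_pmf)
  also have "\<dots> = bind_pmf (bind_pmf (Poi \<mu>) (\<lambda>X. map_pmf ?cnt (iid_list X ?U0)))
     (\<lambda>c0. bind_pmf (bind_pmf (Poi lam) (\<lambda>n1. map_pmf ?cnt (iid_list n1 ?U1))) (\<lambda>c1. ?E c0 c1))"
    by (simp add: bind_assoc_pmf bind_map_pmf)
  also have "\<dots> = bind_pmf (Pi_pmf {0..Suc d'} 0 (\<lambda>_. Poi (\<mu> / real (card {0..Suc d'}))))
    (\<lambda>c0. bind_pmf (Pi_pmf ({0..Suc d'} - {1}) 0 (\<lambda>_. Poi (lam / real (card ({0..Suc d'} - {1}))))) (\<lambda>c1. ?E c0 c1))"
  proof -
    have t0: "bind_pmf (Poi \<mu>) (\<lambda>X. map_pmf ?cnt (iid_list X ?U0)) = Pi_pmf {0..Suc d'} 0 (\<lambda>_. Poi (\<mu> / real (card {0..Suc d'})))"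
      using mu by (intro thin) auto
    have t1: "bind_pmf (Poi lam) (\<lambda>X. map_pmf ?cnt (iid_list X ?U1)) = Pi_pmf ({0..Suc d'} - {1}) 0 (\<lambda>_. Poi (lam / real (card ({0..Suc d'} - {1}))))"
      using lam by (intro thin) auto
    show ?thesis by (simp only: t0 t1)
  qed
  finally show ?thesis .
qed

lemma Mk_alt: "a \<ge> 0 \<Longrightarrow> t \<ge> 0 \<Longrightarrow>
   Mk a t = bind_pmf (Poi a) (\<lambda>x. bind_pmf (Poi t) (\<lambda>y. if 0 < x + y then Poi t else return_pmf 0))"
  unfolding Mk_def Poi_add[symmetric] conv_def by (simp add: bind_assoc_pmf bind_map_pmf)

lemma Q1_step3:
  fixes d' :: nat and lam \<mu> :: real
  assumes lam: "lam \<ge> 0" and mu: "\<mu> \<ge> 0"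
  defines "a \<equiv> \<mu> / real (Suc (Suc d'))" and "t \<equiv> lam / real (Suc d')"
  shows "Q1 (Suc d') \<mu> lam = conv (Poi a) (conv (Poi t) (convL (replicate d' (Mk a t))))"
proof -
  let ?T = "{2..<2+d'}"
  let ?H = "\<lambda>x y. if 0 < x + y then Poi t else return_pmf (0::nat)"
  have a0: "a \<ge> 0" and t0: "t \<ge> 0" using lam mu by (auto simp: a_def t_def)
  have ins0: "{0..Suc d'} = insert 0 (insert 1 ?T)" by auto
  have ins1: "{0..Suc d'} - {1} = insert 0 ?T" by auto
  have c0: "card {0..Suc d'} = Suc (Suc d')" by simp
  have c1: "card ({0..Suc d'} - {1}) = Suc d'" by simp
  have n1: "(1::nat) \<notin> ?T" and n0: "(0::nat) \<notin> insert 1 ?T" and n0': "(0::nat) \<notin> ?T" by auto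
  have Eev: "map_pmf ((+) ((g0(1:=r1, 0:=r0)) 0 + (g1(0:=s0)) 0))
       (convL (map (\<lambda>k. ?H ((g0(1:=r1, 0:=r0)) k) ((g1(0:=s0)) k)) [2..<2+d']))
     = map_pmf ((+) (r0 + s0)) (convL (map (\<lambda>k. ?H (g0 k) (g1 k)) [2..<2+d']))" for g0 g1 :: "nat \<Rightarrow> nat" and r0 r1 s0
  proof -
    have "map (\<lambda>k. ?H ((g0(1:=r1, 0:=r0)) k) ((g1(0:=s0)) k)) [2..<2+d'] = map (\<lambda>k. ?H (g0 k) (g1 k)) [2..<2+d']"
      by (intro map_cong refl) auto
    then show ?thesis by (subst (asm) eq_commute) (simp only: fun_upd_same fun_upd_other zero_neq_one)
  qed
  have "Q1 (Suc d') \<mu> lam = bind_pmf (Pi_pmf (insert 0 (insert 1 ?T)) 0 (\<lambda>_. Poi a))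
    (\<lambda>c0. bind_pmf (Pi_pmf (insert 0 ?T) 0 (\<lambda>_. Poi t))
    (\<lambda>c1. map_pmf ((+) (c0 0 + c1 0)) (convL (map (\<lambda>k. ?H (c0 k) (c1 k)) [2..<2+d']))))"
    unfolding Q1_step2[OF lam mu] c0 c1 ins0[symmetric] ins1[symmetric] a_def t_def ..
  also have "\<dots> = bind_pmf (Poi a) (\<lambda>r0. bind_pmf (Poi a) (\<lambda>r1. bind_pmf (Pi_pmf ?T 0 (\<lambda>_. Poi a)) (\<lambda>g0.
     bind_pmf (Poi t) (\<lambda>s0. bind_pmf (Pi_pmf ?T 0 (\<lambda>_. Poi t)) (\<lambda>g1.
       map_pmf ((+) (r0 + s0)) (convL (map (\<lambda>k. ?H (g0 k) (g1 k)) [2..<2+d'])))))))"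
  proof -
    have P0: "Pi_pmf (insert 0 (insert 1 ?T)) 0 p = bind_pmf (p 0) (\<lambda>y. bind_pmf (Pi_pmf (insert 1 ?T) 0 p) (\<lambda>f. return_pmf (f(0:=y))))"
      for p :: "nat \<Rightarrow> nat pmf" by (rule Pi_pmf_insert') auto
    have P1: "Pi_pmf (insert 1 ?T) 0 p = bind_pmf (p 1) (\<lambda>y. bind_pmf (Pi_pmf ?T 0 p) (\<lambda>f. return_pmf (f(1:=y))))"
      for p :: "nat \<Rightarrow> nat pmf" by (rule Pi_pmf_insert') auto
    have P2: "Pi_pmf (insert 0 ?T) 0 p = bind_pmf (p 0) (\<lambda>y. bind_pmf (Pi_pmf ?T 0 p) (\<lambda>f. return_pmf (f(0:=y))))"
      for p :: "nat \<Rightarrow> nat pmf" by (rule Pi_pmf_insert') auto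
    show ?thesis unfolding P0 P1 P2
      by (simp only: bind_assoc_pmf bind_return_pmf Eev)
  qed
  also have "\<dots> = bind_pmf (Poi a) (\<lambda>r0. bind_pmf (Pi_pmf ?T 0 (\<lambda>_. Poi a)) (\<lambda>g0.
     bind_pmf (Poi t) (\<lambda>s0. bind_pmf (Pi_pmf ?T 0 (\<lambda>_. Poi t)) (\<lambda>g1.
       map_pmf ((+) (r0 + s0)) (convL (map (\<lambda>k. ?H (g0 k) (g1 k)) [2..<2+d']))))))"
    by (simp only: bind_pmf_const)
  also have "\<dots> = bind_pmf (Poi a) (\<lambda>r0. bind_pmf (Poi t) (\<lambda>s0. bind_pmf (Pi_pmf ?T 0 (\<lambda>_. Poi a)) (\<lambda>g0.
     bind_pmf (Pi_pmf ?T 0 (\<lambda>_. Poi t)) (\<lambda>g1.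
       map_pmf ((+) (r0 + s0)) (convL (map (\<lambda>k. ?H (g0 k) (g1 k)) [2..<2+d']))))))"
    by (rule bind_pmf_cong[OF refl], rule bind_commute_pmf)
  also have "\<dots> = bind_pmf (Poi a) (\<lambda>r0. bind_pmf (Poi t) (\<lambda>s0. map_pmf ((+) (r0 + s0))
       (bind_pmf (Pi_pmf ?T 0 (\<lambda>_. Poi a)) (\<lambda>g0. bind_pmf (Pi_pmf ?T 0 (\<lambda>_. Poi t)) (\<lambda>g1.
         convL (map (\<lambda>k. ?H (g0 k) (g1 k)) [2..<2+d']))))))"
    by (simp only: map_bind_pmf)
  also have "\<dots> = bind_pmf (Poi a) (\<lambda>r0. bind_pmf (Poi t) (\<lambda>s0. map_pmf ((+) (r0 + s0))
       (convL (replicate d' (Mk a t)))))"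
    by (simp only: Pi_conv[where H="\<lambda>x y. if 0 < x + y then Poi t else return_pmf 0"] Mk_alt[OF a0 t0])
  also have "\<dots> = conv (Poi a) (conv (Poi t) (convL (replicate d' (Mk a t))))"
    unfolding conv_def map_bind_pmf pmf.map_comp o_def by (simp add: add.assoc[symmetric])
  finally show ?thesis .
qed

lemma stoch_le_enat: "sdom p q \<Longrightarrow> stoch_le (map_pmf enat p) (map_pmf enat q)"
  unfolding stoch_le_def sdom_def
proof
  fix x :: enat
  assume H: "\<forall>k. measure_pmf.prob p {y. k \<le> y} \<le> measure_pmf.prob q {y. k \<le> y}"
  show "measure_pmf.prob (map_pmf enat p) {y. x \<le> y} \<le> measure_pmf.prob (map_pmf enat q) {y. x \<le> y}"
  proof (cases x)
    case (enat k)
    have "enat -` {y. x \<le> y} = {y. k \<le> y}" using enat by auto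
    then show ?thesis using H by simp
  next
    case infinity
    have "enat -` {y. x \<le> y} = {}" using infinity by auto
    then show ?thesis by simp
  qed
qed

lemma conv_rearr: "conv A (conv B (conv C R)) = conv (conv A C) (conv B R)"
  by (metis conv_assoc conv_comm)

lemma ln2_ge: "ln (2::real) \<ge> 1/2"
proof -
  have "ln (1/2::real) \<le> 1/2 - 1" by (rule ln_le_minus_one) simp
  then show ?thesis by (simp add: ln_div)
qed

theorem mainTheorem12:
  fixes d :: nat and \<mu> :: real
  assumes "d \<ge> 2" and "\<mu> > 2 * (real d + 1) * ln (real d)"
  shows "\<exists>\<epsilon>>0. \<forall>lam::real. lam \<ge> 0 \<longrightarrow> stoch_le (PoiE (lam + \<epsilon>)) (opA d \<mu> (PoiE lam))"
proof -
  define d' where "d' = d - 1"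
  have dd: "d = Suc d'" and d'1: "d' \<ge> 1" using assms(1) by (auto simp: d'_def)
  define a where "a = \<mu> / real (Suc (Suc d'))"
  define c where "c = 1 / real d'"
  have rd: "real d \<ge> 2" using assms(1) by simp
  have lnd: "ln (real d) \<ge> 1/2"
  proof -
    have "ln 2 \<le> ln (real d)" using rd by simp
    then show ?thesis using ln2_ge by linarith
  qed
  have a_gt: "a > 2 * ln (real d)"
    using assms(2) rd unfolding a_def dd by (simp add: field_simps)
  have a1: "a > 1" using a_gt lnd by linarith
  have mu0: "\<mu> \<ge> 0" using a1 unfolding a_def by (simp add: field_simps)
  have c0: "c \<ge> 0" by (simp add: c_def)
  have dc: "real d' * c = 1" using d'1 by (simp add: c_def)
  have ea: "exp (-a) < 1 / (real d)^2"
  proof -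
    have "exp (-a) < exp (- (2 * ln (real d)))" using a_gt by simp
    also have "exp (- (2 * ln (real d))) = 1 / (real d)^2"
    proof -
      have "exp (2 * ln (real d)) = (real d)^2"
        using rd by (simp only: mult_2 exp_add power2_eq_square) simp
      then show ?thesis by (simp add: exp_minus divide_inverse)
    qed
    finally show ?thesis .
  qed
  have ec: "1 - exp (-c) \<ge> 1 / real d"
  proof -
    have "1 + c \<le> exp c" by simp
    then have "exp (-c) \<le> 1 / (1 + c)" using c0 by (simp add: exp_minus field_simps)
    moreover have "1 / (1 + c) = 1 - 1 / real d" using d'1 unfolding c_def dd by (simp add: field_simps)
    ultimately show ?thesis by linarith
  qed
  have h: "exp (-a) \<le> (1 - exp (-a)) * (1 - exp (-c))"
  proof -
    let ?x = "exp (-a)"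
    have x0: "?x > 0" by simp
    have dsq: "real d + 1 \<le> (real d)^2"
    proof -
      have "2 * real d \<le> real d * real d" using rd by (intro mult_right_mono) auto
      then show ?thesis using rd unfolding power2_eq_square by linarith
    qed
    have "1 / (real d)^2 \<le> 1 / (real d + 1)"
      using rd dsq by (intro divide_left_mono) auto
    then have "?x < 1 / (real d + 1)" using ea by linarith
    then have "?x * (real d + 1) < 1" using rd by (simp add: less_divide_eq)
    then have "?x * (real d + 1) \<le> 1" by simp
    then have "?x \<le> (1 - ?x) * (1 / real d)" using rd by (simp add: field_simps)
    also have "\<dots> \<le> (1 - ?x) * (1 - exp (-c))"
    proof (rule mult_left_mono[OF ec])
      have "?x < 1" using a1 by simp
      then show "0 \<le> 1 - ?x" by simp
    qed
    finally show ?thesis .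
  qed
  define \<epsilon> where "\<epsilon> = a - 1"
  have eps: "\<epsilon> > 0" using a1 by (simp add: \<epsilon>_def)
  show ?thesis
  proof (intro exI[of _ \<epsilon>] conjI allI impI eps)
    fix lam :: real assume lam: "lam \<ge> 0"
    define t where "t = lam / real (Suc d')"
    have t0: "t \<ge> 0" using lam by (simp add: t_def)
    have a0: "a \<ge> 0" using a1 by simp
    have d1: "d \<ge> 1" using assms(1) by simp
    let ?R = "convL (replicate d' (Mk a t))"
    have Q: "opA d \<mu> (PoiE lam) = map_pmf enat (conv (Poi a) (conv (Poi t) ?R))"
      unfolding opA_eq[OF d1] unfolding dd Q1_step3[OF lam mu0] a_def t_def by (rule refl)
    have lhs: "Poi (lam + \<epsilon>) = conv (Poi \<epsilon>) (conv (Poi t) (convL (replicate d' (Poi t))))"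
    proof -
      have "t + real d' * t = (1 + real d') * t" by (simp add: algebra_simps)
      also have "\<dots> = lam" unfolding t_def by simp
      finally have "lam = t + real d' * t" by simp
      then show ?thesis using t0 eps by (simp add: convL_rep_Poi Poi_add algebra_simps)
    qed
    have s1: "sdom (convL (replicate d' (Poi t))) (convL (replicate d' (conv (Poi c) (Mk a t))))"
      by (rule sdom_convL) (simp add: list_all2_conv_all_nth key_sdom[OF a0 t0 c0 h])
    have r1: "convL (replicate d' (conv (Poi c) (Mk a t))) = conv (Poi 1) ?R"
      unfolding convL_rep_conv convL_rep_Poi[OF c0] dc ..
    have "sdom (Poi (lam + \<epsilon>)) (conv (Poi \<epsilon>) (conv (Poi t) (conv (Poi 1) ?R)))"
      unfolding lhs r1[symmetric] by (intro sdom_conv2 sdom_refl s1)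
    also have "conv (Poi \<epsilon>) (conv (Poi t) (conv (Poi 1) ?R)) = conv (Poi a) (conv (Poi t) ?R)"
      unfolding conv_rearr using eps by (simp add: Poi_add \<epsilon>_def)
    finally have "sdom (Poi (lam + \<epsilon>)) (conv (Poi a) (conv (Poi t) ?R))" .
    then have "stoch_le (map_pmf enat (Poi (lam + \<epsilon>))) (opA d \<mu> (PoiE lam))"
      unfolding Q by (rule stoch_le_enat)
    then show "stoch_le (PoiE (lam + \<epsilon>)) (opA d \<mu> (PoiE lam))" by (simp add: PoiE_def)
  qed
qed

end
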